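(* Let $q>1$, $\delta:=[2(q+1)]^{1/(q-1)}$, and let $W$ be a (small) neighborhood of $0$ in $\mathbb{R}$. There are constants $C_6,C_7>0$ such that for all $a\in[1/2,1]$, all $0<\xi\leq C_6$, all $0<\eta\leq C_6$, and every $C^1$ function $r:[0,\delta]\to\mathbb{R}$ with $\sup_{t\in[0,\delta]}\big(|r(t)|+|r'(t)|\big)\leq\xi$, the map $f_{a,r}:[0,\delta]\to\mathbb{R}$, $f_{a,r}(t):=\frac{t^2}{2}-a\frac{t^{q+1}}{q+1}+r(t)$, satisfies $$t\in[0,\delta]\setminus W,\ |f'_{a,r}(t)|\leq\eta\ \Longrightarrow\ |t-a^{-1/(q-1)}|\leq C_7(\xi+\eta),$$ and $$\inf_{t\in[0,\delta]\setminus W,\ |f'_{a,r}(t)|\leq\eta}f_{a,r}(t)\geq\Big(\frac12-\frac{1}{q+1}\Big)\Big(\frac1a\Big)^{2/(q-1)}-C_7(\xi+\eta).$$ *)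

theory Defs
  imports "HOL-Analysis.Analysis"
begin

definition delta_q :: "real \<Rightarrow> real" where
  "delta_q q = (2 * (q + 1)) powr (1 / (q - 1))"

definition f_ar :: "real \<Rightarrow> real \<Rightarrow> (real \<Rightarrow> real) \<Rightarrow> real \<Rightarrow> real" where
  "f_ar q a r t = t^2 / 2 - a * t powr (q + 1) / (q + 1) + r t"

(* derivative of f_ar q a r, given a derivative r' of r *)
definition f_ar' :: "real \<Rightarrow> real \<Rightarrow> (real \<Rightarrow> real) \<Rightarrow> real \<Rightarrow> real" where
  "f_ar' q a r' t = t - a * t powr q + r' t"

end

theory Submission
  imports Defs
begin


lemma powr_lower_bound:
  fixes p m M x :: real
  assumes "p > 0" "m > 0" "m \<le> z" "z \<le> M"
  shows "min (m powr (p-1)) (M powr (p-1)) \<le> z powr (p-1)"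
proof (cases "p - 1 \<ge> 0")
  case True
  then have "m powr (p-1) \<le> z powr (p-1)" using assms by (intro powr_mono2) auto
  then show ?thesis by linarith
next
  case False
  then have "M powr (p-1) \<le> z powr (p-1)" using assms by (intro powr_mono2') auto
  then show ?thesis by linarith
qed

lemma powr_sep_lt:
  fixes p m M x y :: real
  assumes "p > 0" "m > 0" "m \<le> x" "x < y" "y \<le> M"
  shows "(y - x) * (p * min (m powr (p-1)) (M powr (p-1))) \<le> y powr p - x powr p"
proof -
  have "\<exists>z. x < z \<and> z < y \<and> y powr p - x powr p = (y - x) * (p * z powr (p - 1))"
    using assms by (intro MVT2) (auto intro!: has_real_derivative_powr)
  then obtain z where z: "x < z" "z < y" "y powr p - x powr p = (y - x) * (p * z powr (p - 1))" by blast
  have "min (m powr (p-1)) (M powr (p-1)) \<le> z powr (p-1)"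
    using assms z by (intro powr_lower_bound) auto
  then have "p * min (m powr (p-1)) (M powr (p-1)) \<le> p * z powr (p-1)"
    using assms by (intro mult_left_mono) auto
  then show ?thesis unfolding z(3) using assms by (intro mult_left_mono) auto
qed

lemma powr_sep:
  fixes p m M x y :: real
  assumes "p > 0" "m > 0" "m \<le> x" "x \<le> M" "m \<le> y" "y \<le> M"
  shows "\<bar>x - y\<bar> * (p * min (m powr (p-1)) (M powr (p-1))) \<le> \<bar>x powr p - y powr p\<bar>"
proof -
  consider "x < y" | "x = y" | "y < x" by linarith
  then show ?thesis
  proof cases
    case 1
    from powr_sep_lt[OF assms(1,2,3) 1 assms(6)] 1 show ?thesis by (simp add: abs_if)
  next
    case 2 then show ?thesis by simp
  next
    case 3
    from powr_sep_lt[OF assms(1,2,5) 3 assms(4)] 3 show ?thesis by (simp add: abs_if)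
  qed
qed

definition hh :: "real \<Rightarrow> real \<Rightarrow> real \<Rightarrow> real" where
  "hh q a t = t^2 / 2 - a * t powr (q + 1) / (q + 1)"

lemma hh_lip_lt:
  fixes q a m M x y :: real
  assumes "q > 1" "0 \<le> a" "a \<le> 1" "m > 0" "m \<le> x" "x < y" "y \<le> M"
  shows "\<bar>hh q a y - hh q a x\<bar> \<le> (M + M powr q) * (y - x)"
proof -
  have "\<exists>z. x < z \<and> z < y \<and> hh q a y - hh q a x = (y - x) * (z - a * z powr q)"
  proof (intro MVT2)
    fix z assume "x \<le> z" "z \<le> y"
    then have "z > 0" using assms by auto
    then show "DERIV (hh q a) z :> z - a * z powr q"
      unfolding hh_def using assms
      by (auto intro!: derivative_eq_intros)
  qed (use assms in auto)
  then obtain z where z: "x < z" "z < y" "hh q a y - hh q a x = (y - x) * (z - a * z powr q)" by blast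
  have zp: "z > 0" using z assms by auto
  have h1: "z powr q \<le> M powr q" using z assms by (intro powr_mono2) auto
  have h2: "a * z powr q \<le> z powr q" using assms zp by (simp add: mult_left_le_one_le)
  have h3: "0 \<le> a * z powr q" using assms by simp
  have "\<bar>z - a * z powr q\<bar> \<le> M + M powr q" unfolding abs_le_iff using z assms h1 h2 h3 by linarith
  then show ?thesis unfolding z(3) abs_mult using z
    by (simp add: mult.commute mult_left_mono)
qed

lemma hh_lip:
  fixes q a m M x y :: real
  assumes "q > 1" "0 \<le> a" "a \<le> 1" "m > 0" "m \<le> x" "x \<le> M" "m \<le> y" "y \<le> M"
  shows "\<bar>hh q a y - hh q a x\<bar> \<le> (M + M powr q) * \<bar>y - x\<bar>"
proof -
  consider "x < y" | "x = y" | "y < x" by linarith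
  then show ?thesis
  proof cases
    case 1 then show ?thesis using hh_lip_lt[OF assms(1-5) 1 assms(8)] by simp
  next
    case 2 then show ?thesis by simp
  next
    case 3 then show ?thesis using hh_lip_lt[OF assms(1-4,7) 3 assms(6)] by (simp add: abs_minus_commute)
  qed
qed

theorem lemma3p4:
  fixes q :: real and W :: "real set"
  assumes hq: "q > 1"
    and hW: "\<exists>U. open U \<and> 0 \<in> U \<and> U \<subseteq> W"
  shows "\<exists>C6 C7. C6 > 0 \<and> C7 > 0 \<and>
    (\<forall>a \<xi> \<eta> (r :: real \<Rightarrow> real) (r' :: real \<Rightarrow> real).
       a \<in> {1/2..1} \<and> 0 < \<xi> \<and> \<xi> \<le> C6 \<and> 0 < \<eta> \<and> \<eta> \<le> C6 \<and>
       (\<forall>t \<in> {0..delta_q q}. (r has_real_derivative r' t) (at t within {0..delta_q q})) \<and>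
       continuous_on {0..delta_q q} r' \<and>
       (\<forall>t \<in> {0..delta_q q}. \<bar>r t\<bar> + \<bar>r' t\<bar> \<le> \<xi>)
     \<longrightarrow>
       (\<forall>t \<in> {0..delta_q q} - W. \<bar>f_ar' q a r' t\<bar> \<le> \<eta> \<longrightarrow>
           \<bar>t - a powr (-1 / (q - 1))\<bar> \<le> C7 * (\<xi> + \<eta>)) \<and>
       (\<forall>t \<in> {0..delta_q q} - W. \<bar>f_ar' q a r' t\<bar> \<le> \<eta> \<longrightarrow>
           f_ar q a r t \<ge> (1/2 - 1/(q+1)) * (1/a) powr (2/(q-1)) - C7 * (\<xi> + \<eta>)))"
proof -
  obtain U where U: "open U" "0 \<in> U" "U \<subseteq> W" using hW by blast
  obtain e where e: "e > 0" "ball 0 e \<subseteq> U" using U open_contains_ball by blast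
  define p where "p = q - 1"
  define D where "D = delta_q q"
  define m where "m = min e 1"
  define c where "c = p * min (m powr (p-1)) (D powr (p-1))"
  define K where "K = 2 / (m * c)"
  define L where "L = D + D powr q"
  define C7 where "C7 = K + L * K + 1"
  have pp: "p > 0" using hq p_def by simp
  have mp: "m > 0" "m \<le> 1" "m \<le> e" using e m_def by auto
  have D2: "2 powr (1/p) \<le> D" unfolding D_def delta_q_def p_def[symmetric]
    using hq pp by (intro powr_mono2) auto
  have D1: "1 \<le> D" using D2 pp ge_one_powr_ge_zero[of 2 "1/p"] by simp
  have cp: "c > 0" unfolding c_def using pp mp D1 by simp
  have Kp: "K > 0" unfolding K_def using mp cp by simp
  have Lp: "L > 0" unfolding L_def using D1
    by (smt (verit) powr_ge_zero)
  have C7p: "C7 > 0" unfolding C7_def using Kp Lp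
    by (smt (verit) mult_pos_pos)
  show ?thesis
  proof (rule exI[of _ 1], rule exI[of _ C7], intro conjI[OF _ conjI[OF C7p]] allI impI)
    show "(0::real) < 1" by simp
  next
    fix a \<xi> \<eta> :: real and r r' :: "real \<Rightarrow> real"
    assume H: "a \<in> {1/2..1} \<and> 0 < \<xi> \<and> \<xi> \<le> 1 \<and> 0 < \<eta> \<and> \<eta> \<le> 1 \<and>
       (\<forall>t \<in> {0..delta_q q}. (r has_real_derivative r' t) (at t within {0..delta_q q})) \<and>
       continuous_on {0..delta_q q} r' \<and>
       (\<forall>t \<in> {0..delta_q q}. \<bar>r t\<bar> + \<bar>r' t\<bar> \<le> \<xi>)"
    have a: "1/2 \<le> a" "a \<le> 1" using H by auto
    have ap: "a > 0" using a by simp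
    have rb: "\<And>t. t \<in> {0..D} \<Longrightarrow> \<bar>r t\<bar> + \<bar>r' t\<bar> \<le> \<xi>" using H D_def by auto
    define t0 where "t0 = a powr (-1/(q-1))"
    have t0': "t0 = (1/a) powr (1/p)" unfolding t0_def p_def using ap
      by (simp add: powr_minus_divide powr_divide)
    have t0ge: "1 \<le> t0" unfolding t0' using a pp by (intro ge_one_powr_ge_zero) auto
    have t0le: "t0 \<le> 2 powr (1/p)" unfolding t0' using a pp ap by (intro powr_mono2) (auto simp: field_simps)
    have t0pos: "t0 > 0" using t0ge by simp
    have t0p: "t0 powr p = 1/a" unfolding t0' using pp ap by (simp add: powr_powr)
    have t0sq: "t0^2 = (1/a) powr (2/p)"
    proof -
      have "t0^2 = t0 powr 2" using t0pos by (simp add: powr_realpow)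
      also have "\<dots> = (1/a) powr (2/p)" unfolding t0' using ap by (simp add: powr_powr)
      finally show ?thesis .
    qed
    have t0q: "t0 powr (q+1) = t0^2 / a"
    proof -
      have "t0 powr (q+1) = t0 powr (2 + p)" unfolding p_def by (simp add: add.commute)
      also have "\<dots> = t0 powr 2 * t0 powr p" by (simp add: powr_add)
      also have "\<dots> = t0^2 / a" using t0pos t0p by (simp add: powr_realpow)
      finally show ?thesis .
    qed
    have hh0: "hh q a t0 = (1/2 - 1/(q+1)) * (1/a) powr (2/(q-1))"
      unfolding hh_def t0q t0sq[symmetric] p_def[symmetric] using ap by (simp add: field_simps)
    have key: "\<bar>t - t0\<bar> \<le> K * (\<xi> + \<eta>)"
      if t: "t \<in> {0..delta_q q} - W" "\<bar>f_ar' q a r' t\<bar> \<le> \<eta>" for t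
    proof -
      have tD: "t \<in> {0..D}" using t D_def by auto
      have "t \<notin> ball 0 e" using t e(2) U(3) by blast
      then have te: "e \<le> t" using tD by (auto simp: dist_real_def)
      then have tm: "m \<le> t" using mp by simp
      have tpos: "t > 0" using tm mp by simp
      have tq: "t powr q = t * t powr p"
      proof -
        have "t powr q = t powr (1 + p)" unfolding p_def by simp
        also have "\<dots> = t * t powr p" using tpos by (simp add: powr_add)
        finally show ?thesis .
      qed
      have "\<bar>r' t\<bar> \<le> \<xi>" using rb[OF tD] by simp
      then have "\<bar>t - a * t powr q\<bar> \<le> \<xi> + \<eta>" using t(2) unfolding f_ar'_def by simp
      moreover have "t - a * (t * t powr p) = t * (1 - a * t powr p)" by (simp add: algebra_simps)
      ultimately have "t * \<bar>1 - a * t powr p\<bar> \<le> \<xi> + \<eta>" unfolding tq using tpos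
        by (simp add: abs_mult)
      moreover have "m * \<bar>1 - a * t powr p\<bar> \<le> t * \<bar>1 - a * t powr p\<bar>"
        using tm by (simp add: mult_right_mono)
      ultimately have b1: "m * \<bar>1 - a * t powr p\<bar> \<le> \<xi> + \<eta>" by linarith
      have "\<bar>t powr p - t0 powr p\<bar> = \<bar>1 - a * t powr p\<bar> / a"
        unfolding t0p using ap by (simp add: field_simps abs_minus_commute)
      also have "\<dots> \<le> 2 * \<bar>1 - a * t powr p\<bar>"
      proof -
        have "\<bar>1 - a * t powr p\<bar> \<le> (2 * a) * \<bar>1 - a * t powr p\<bar>"
          using mult_right_mono[of 1 "2 * a" "\<bar>1 - a * t powr p\<bar>"] a by simp
        then show ?thesis using ap by (simp add: field_simps)
      qed
      finally have "m * \<bar>t powr p - t0 powr p\<bar> \<le> m * (2 * \<bar>1 - a * t powr p\<bar>)"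
        using mp by (intro mult_left_mono) auto
      also have "m * (2 * \<bar>1 - a * t powr p\<bar>) = 2 * (m * \<bar>1 - a * t powr p\<bar>)" by simp
      also have "\<dots> \<le> 2 * (\<xi> + \<eta>)" using b1 by simp
      finally have b2: "m * \<bar>t powr p - t0 powr p\<bar> \<le> 2 * (\<xi> + \<eta>)" .
      have "\<bar>t - t0\<bar> * c \<le> \<bar>t powr p - t0 powr p\<bar>"
        unfolding c_def using pp mp tm tD t0ge t0le D2 by (intro powr_sep) auto
      then have "m * (\<bar>t - t0\<bar> * c) \<le> m * \<bar>t powr p - t0 powr p\<bar>" using mp
        by (intro mult_left_mono) auto
      then have "m * (\<bar>t - t0\<bar> * c) \<le> 2 * (\<xi> + \<eta>)" using b2 by linarith
      then show ?thesis unfolding K_def using mp cp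
        by (simp add: field_simps)
    qed
    have c1: "\<forall>t \<in> {0..delta_q q} - W. \<bar>f_ar' q a r' t\<bar> \<le> \<eta> \<longrightarrow>
           \<bar>t - a powr (-1 / (q - 1))\<bar> \<le> C7 * (\<xi> + \<eta>)"
    proof (intro ballI impI)
      fix t assume t: "t \<in> {0..delta_q q} - W" "\<bar>f_ar' q a r' t\<bar> \<le> \<eta>"
      have "\<bar>t - t0\<bar> \<le> K * (\<xi> + \<eta>)" using key[OF t] .
      also have "\<dots> \<le> C7 * (\<xi> + \<eta>)" unfolding C7_def using H Kp Lp
        by (intro mult_right_mono) auto
      finally show "\<bar>t - a powr (-1 / (q - 1))\<bar> \<le> C7 * (\<xi> + \<eta>)" unfolding t0_def .
    qed
    have c2: "\<forall>t \<in> {0..delta_q q} - W. \<bar>f_ar' q a r' t\<bar> \<le> \<eta> \<longrightarrow>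
           f_ar q a r t \<ge> (1/2 - 1/(q+1)) * (1/a) powr (2/(q-1)) - C7 * (\<xi> + \<eta>)"
    proof (intro ballI impI)
      fix t assume t: "t \<in> {0..delta_q q} - W" "\<bar>f_ar' q a r' t\<bar> \<le> \<eta>"
      have k: "\<bar>t - t0\<bar> \<le> K * (\<xi> + \<eta>)" using key[OF t] .
      have tD: "t \<in> {0..D}" using t D_def by auto
      have "t \<notin> ball 0 e" using t e(2) U(3) by blast
      then have te: "e \<le> t" using tD by (auto simp: dist_real_def)
      then have tm: "m \<le> t" using mp by simp
      have "\<bar>hh q a t - hh q a t0\<bar> \<le> L * \<bar>t - t0\<bar>" unfolding L_def
        using hq a mp tm tD t0ge t0le D2 by (intro hh_lip) auto
      also have "\<dots> \<le> L * (K * (\<xi> + \<eta>))" using k Lp by (intro mult_left_mono) auto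
      finally have hb: "\<bar>hh q a t - hh q a t0\<bar> \<le> L * K * (\<xi> + \<eta>)" by simp
      have "\<bar>r t\<bar> \<le> \<xi>" using rb[OF tD] by simp
      moreover have "f_ar q a r t = hh q a t + r t" unfolding f_ar_def hh_def by simp
      moreover have "C7 * (\<xi> + \<eta>) = K * (\<xi> + \<eta>) + L * K * (\<xi> + \<eta>) + (\<xi> + \<eta>)"
        unfolding C7_def by (simp add: algebra_simps)
      moreover have "K * (\<xi> + \<eta>) \<ge> 0" using Kp H by simp
      ultimately show "f_ar q a r t \<ge> (1/2 - 1/(q+1)) * (1/a) powr (2/(q-1)) - C7 * (\<xi> + \<eta>)"
        using hb hh0 H unfolding abs_le_iff by linarith
    qed
    show "(\<forall>t \<in> {0..delta_q q} - W. \<bar>f_ar' q a r' t\<bar> \<le> \<eta> \<longrightarrow>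
           \<bar>t - a powr (-1 / (q - 1))\<bar> \<le> C7 * (\<xi> + \<eta>)) \<and>
       (\<forall>t \<in> {0..delta_q q} - W. \<bar>f_ar' q a r' t\<bar> \<le> \<eta> \<longrightarrow>
           f_ar q a r t \<ge> (1/2 - 1/(q+1)) * (1/a) powr (2/(q-1)) - C7 * (\<xi> + \<eta>))"
      using c1 c2 by (rule conjI)
  qed
qed

end
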